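(* Let $n\ge 2$. For every $T\in\mathrm{C}$ we have $\hat{\tilde T}T\in\mathrm{C}^{\overline{03}}$. Consequently, $$\mathrm{B}=\begin{cases}\{T\in\mathrm{C}^\times:\ \hat{\tilde T} T\in(\mathrm{C}^0)^\times\}, & n\equiv 0,1,2 \pmod 4,\\ \{T\in\mathrm{C}^\times:\ \hat{\tilde T} T\in(\mathrm{C}^0\oplus\mathrm{C}^n)^\times\}, & n\equiv 3\pmod 4.\end{cases}$$ In particular, $\mathrm{B}=\mathrm{C}^\times$ for $n\le 3$.
   Context: Let $\mathrm{C}$ be either the real Clifford algebra $C\ell_{p,q}$ with $p+q=n$, or the complex Clifford algebra $C\ell(\mathbb{C}^n)$. It has identity $e$ and generators $e_1,\dots,e_n$ satisfying $e_ae_b+e_be_a=2\eta_{ab}e$. In the real case $\eta=\mathrm{diag}(1,\dots,1,-1,\dots,-1)$ with $p$ entries $+1$ and $q$ entries $-1$. In the complex case $\eta=I_n$. $\mathrm{C}^k$ is the grade-$k$ subspace, spanned by the products $e_{a_1}\cdots e_{a_k}$ with $a_1<\dots<a_k$. The grade involution $U\mapsto\hat U$ is the linear automorphism acting on $\mathrm{C}^k$ as $(-1)^k$. The reversion $U\mapsto\tilde U$ is the linear anti-automorphism acting on $\mathrm{C}^k$ as $(-1)^{k(k-1)/2}$. $\hat{\tilde T}$ denotes the grade involution of $\tilde T$. For $m=0,1,2,3$ let $\mathrm{C}^{\overline m}=\bigoplus_{k\equiv m \pmod 4}\mathrm{C}^k$, and $\mathrm{C}^{\overline{kl}}=\mathrm{C}^{\overline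 k}\oplus\mathrm{C}^{\overline l}$. For $S\subseteq\mathrm{C}$, $S^\times$ is the set of elements of $S$ invertible in $\mathrm{C}$. $\mathrm{Z}$ is the center: $\mathrm{Z}=\mathrm{C}^0$ for $n$ even and $\mathrm{Z}=\mathrm{C}^0\oplus\mathrm{C}^n$ for $n$ odd. Define $\mathrm{B}:=\{T\in\mathrm{C}^\times:\ \hat{\tilde T} T\in\mathrm{Z}^\times\}$. *)

theory Defs
  imports Complex_Main
begin

text \<open>Concrete model of a Clifford algebra on n generators with diagonal metric eta.
  An element is a coefficient function on blades: sets A of generator indices
  (generators are indexed 0..n-1); the blade A stands for the ordered product
  e_{a_1} ... e_{a_k} with a_1 < ... < a_k.\<close>

type_synonym 'a clif = "nat set \<Rightarrow> 'a"

definition cl_carrier :: "nat \<Rightarrow> 'a::comm_ring_1 clif set" where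
  "cl_carrier n = {u. \<forall>A. \<not> A \<subseteq> {0..<n} \<longrightarrow> u A = 0}"

text \<open>Sign and metric factor in e_A e_B = blade_sign eta A B e_{A symmetric-difference B}.\<close>
definition blade_sign :: "(nat \<Rightarrow> 'a::comm_ring_1) \<Rightarrow> nat set \<Rightarrow> nat set \<Rightarrow> 'a" where
  "blade_sign eta A B =
     (-1) ^ card {(a, b). a \<in> A \<and> b \<in> B \<and> b < a} * (\<Prod>a\<in>A \<inter> B. eta a)"

definition cl_mult :: "nat \<Rightarrow> (nat \<Rightarrow> 'a::comm_ring_1) \<Rightarrow> 'a clif \<Rightarrow> 'a clif \<Rightarrow> 'a clif" where
  "cl_mult n eta u v = (\<lambda>C. \<Sum>A\<in>Pow {0..<n}. \<Sum>B\<in>Pow {0..<n}.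
      if (A - B) \<union> (B - A) = C then u A * v B * blade_sign eta A B else 0)"

definition cl_one :: "'a::comm_ring_1 clif" where
  "cl_one = (\<lambda>A. if A = {} then 1 else 0)"

definition cl_hat :: "'a::comm_ring_1 clif \<Rightarrow> 'a clif" where
  "cl_hat u = (\<lambda>A. (-1) ^ card A * u A)"

definition cl_rev :: "'a::comm_ring_1 clif \<Rightarrow> 'a clif" where
  "cl_rev u = (\<lambda>A. (-1) ^ (card A * (card A - 1) div 2) * u A)"

definition cl_grades :: "nat \<Rightarrow> nat set \<Rightarrow> 'a::comm_ring_1 clif set" where
  "cl_grades n K = {u \<in> cl_carrier n. \<forall>A. card A \<notin> K \<longrightarrow> u A = 0}"

text \<open>C^{overline m}, the sum of grades congruent to m mod 4, for a set M of residues.\<close>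
definition cl_grades_mod4 :: "nat \<Rightarrow> nat set \<Rightarrow> 'a::comm_ring_1 clif set" where
  "cl_grades_mod4 n M = {u \<in> cl_carrier n. \<forall>A. card A mod 4 \<notin> M \<longrightarrow> u A = 0}"

definition cl_units :: "nat \<Rightarrow> (nat \<Rightarrow> 'a::comm_ring_1) \<Rightarrow> 'a clif set" where
  "cl_units n eta = {u \<in> cl_carrier n. \<exists>v\<in>cl_carrier n.
      cl_mult n eta u v = cl_one \<and> cl_mult n eta v u = cl_one}"

text \<open>Center as in the paper: C^0 for n even, C^0 + C^n for n odd.\<close>
definition cl_Z :: "nat \<Rightarrow> 'a::comm_ring_1 clif set" where
  "cl_Z n = (if even n then cl_grades n {0} else cl_grades n {0, n})"

definition cl_B :: "nat \<Rightarrow> (nat \<Rightarrow> 'a::comm_ring_1) \<Rightarrow> 'a clif set" where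
  "cl_B n eta = {T \<in> cl_units n eta.
      cl_mult n eta (cl_hat (cl_rev T)) T \<in> cl_Z n \<inter> cl_units n eta}"

definition eta_pq :: "nat \<Rightarrow> nat \<Rightarrow> real" where
  "eta_pq p i = (if i < p then 1 else -1)"

end

theory Submission
  imports Defs
begin

lemma tri2: "int (k * (k - 1) div 2) * 2 = int k * (int k - 1)"
proof (cases k)
  case 0 then show ?thesis by simp
next
  case (Suc j)
  have "even (k * (k - 1))" by auto
  then have "k * (k - 1) div 2 * 2 = k * (k - 1)" by simp
  then have "int (k * (k - 1) div 2) * 2 = int (k * (k - 1))" by (metis of_nat_mult of_nat_numeral)
  also have "\<dots> = int k * (int k - 1)" using Suc by (simp add: algebra_simps)
  finally show ?thesis .
qed

lemma par:
  fixes N1 N2 c a b m :: nat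
  assumes h1: "N1 + N2 + c = a * b" and h2: "m + 2 * c = a + b"
  shows "even (N1 + N2 + m + m * (m - 1) div 2 + a + a * (a - 1) div 2 + b + b * (b - 1) div 2)"
proof -
  let ?S = "N1 + N2 + m + m * (m - 1) div 2 + a + a * (a - 1) div 2 + b + b * (b - 1) div 2"
  obtain ka where ka: "int a * (int a + 1) = 2 * ka"
    by (metis dvd_def even_mult_iff even_add odd_one)
  obtain kb where kb: "int b * (int b + 1) = 2 * kb"
    by (metis dvd_def even_mult_iff even_add odd_one)
  have H1: "int N1 + int N2 + int c = int a * int b" using h1 by (metis of_nat_add of_nat_mult)
  have H2: "int m = int a + int b - 2 * int c" using h2 by linarith
  have "int ?S * 2 = (int N1 + int N2) * 2 + int m * 2 + int m * (int m - 1) + int a * 2 + int a * (int a - 1)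
      + int b * 2 + int b * (int b - 1)"
    using tri2[of m] tri2[of a] tri2[of b] by (simp add: algebra_simps)
  also have "\<dots> = 4 * (int a * int b - int c - int c * (int a + int b) + int c * int c + ka + kb)"
    unfolding H2 using H1 ka kb by (simp add: algebra_simps)
  finally have "int ?S = 2 * (int a * int b - int c - int c * (int a + int b) + int c * int c + ka + kb)" by simp
  then have "even (int ?S)" by simp
  then show ?thesis by simp
qed

lemma card_fact1:
  fixes A B :: "nat set"
  assumes A: "finite A" and B: "finite B"
  shows "card {(a, b). a \<in> A \<and> b \<in> B \<and> b < a} + card {(a, b). a \<in> B \<and> b \<in> A \<and> b < a} + card (A \<inter> B)
    = card A * card B"
proof -
  let ?S1 = "{(a, b). a \<in> A \<and> b \<in> B \<and> b < a}"
  let ?S2 = "{(a, b). a \<in> B \<and> b \<in> A \<and> b < a}"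
  let ?S2' = "{(a, b). a \<in> A \<and> b \<in> B \<and> a < b}"
  let ?D = "{(a, b). a \<in> A \<and> b \<in> B \<and> a = b}"
  have fAB: "finite (A \<times> B)" using A B by simp
  have u: "A \<times> B = (?S1 \<union> ?S2') \<union> ?D" by auto
  have f1: "finite ?S1" by (rule finite_subset[OF _ fAB]) auto
  have f2: "finite ?S2'" by (rule finite_subset[OF _ fAB]) auto
  have f3: "finite ?D" by (rule finite_subset[OF _ fAB]) auto
  have c2: "card ?S2' = card ?S2"
  proof -
    have "?S2' = prod.swap ` ?S2" by auto
    moreover have "inj_on prod.swap ?S2" by (simp add: inj_on_def)
    ultimately show ?thesis by (simp add: card_image)
  qed
  have c3: "card ?D = card (A \<inter> B)"
  proof -
    have "?D = (\<lambda>x. (x, x)) ` (A \<inter> B)" by auto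
    moreover have "inj_on (\<lambda>x. (x, x)) (A \<inter> B)" by (simp add: inj_on_def)
    ultimately show ?thesis by (simp add: card_image)
  qed
  have "card (A \<times> B) = card (?S1 \<union> ?S2') + card ?D"
    unfolding u by (rule card_Un_disjoint) (use f1 f2 f3 in auto)
  also have "card (?S1 \<union> ?S2') = card ?S1 + card ?S2'"
    by (rule card_Un_disjoint) (use f1 f2 in auto)
  finally show ?thesis using c2 c3 by (simp add: card_cartesian_product)
qed

lemma card_fact2:
  assumes A: "finite A" and B: "finite B"
  shows "card ((A - B) \<union> (B - A)) + 2 * card (A \<inter> B) = card A + card B"
proof -
  have "card ((A - B) \<union> (B - A)) = card (A - B) + card (B - A)"
    by (rule card_Un_disjoint) (use A B in auto)
  moreover have "card A = card (A - B) + card (A \<inter> B)"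
  proof -
    have "A = (A - B) \<union> (A \<inter> B)" by auto
    then have "card A = card ((A - B) \<union> (A \<inter> B))" by simp
    also have "\<dots> = card (A - B) + card (A \<inter> B)" by (rule card_Un_disjoint) (use A in auto)
    finally show ?thesis .
  qed
  moreover have "card B = card (B - A) + card (A \<inter> B)"
  proof -
    have "B = (B - A) \<union> (A \<inter> B)" by auto
    then have "card B = card ((B - A) \<union> (A \<inter> B))" by simp
    also have "\<dots> = card (B - A) + card (A \<inter> B)" by (rule card_Un_disjoint) (use B in auto)
    finally show ?thesis .
  qed
  ultimately show ?thesis by simp
qed

definition sgn4 :: "nat \<Rightarrow> 'a::comm_ring_1" where
  "sgn4 k = (-1) ^ k * (-1) ^ (k * (k - 1) div 2)"

lemma rev_sign:
  assumes A: "finite A" and B: "finite B"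
  shows "sgn4 (card ((A - B) \<union> (B - A))) * blade_sign eta A B = sgn4 (card A) * sgn4 (card B) * blade_sign eta B A"
proof -
  let ?N1 = "card {(a, b). a \<in> A \<and> b \<in> B \<and> b < a}"
  let ?N2 = "card {(a, b). a \<in> B \<and> b \<in> A \<and> b < a}"
  let ?m = "card ((A - B) \<union> (B - A))"
  have ev: "even (?N1 + ?N2 + ?m + ?m * (?m - 1) div 2 + card A + card A * (card A - 1) div 2
      + card B + card B * (card B - 1) div 2)"
    by (rule par[OF card_fact1[OF A B] card_fact2[OF A B]])
  have "(-1::'a) ^ ?N1 * sgn4 ?m = (-1) ^ (?N1 + ?m + ?m * (?m - 1) div 2)"
    by (simp add: sgn4_def power_add)
  also have "\<dots> = (-1) ^ (card A + card A * (card A - 1) div 2 + card B + card B * (card B - 1) div 2 + ?N2)"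
    using ev unfolding minus_one_power_iff by auto
  also have "\<dots> = sgn4 (card A) * sgn4 (card B) * (-1) ^ ?N2"
    by (simp add: sgn4_def power_add)
  finally have "(-1::'a) ^ ?N1 * sgn4 ?m = sgn4 (card A) * sgn4 (card B) * (-1) ^ ?N2" .
  then show ?thesis unfolding blade_sign_def by (simp add: Int_commute ac_simps)
qed
lemma sgn4_sq: "(sgn4 k :: 'a::comm_ring_1) * sgn4 k = 1"
  by (simp add: sgn4_def minus_one_power_iff)


definition cconj :: "'a::comm_ring_1 clif \<Rightarrow> 'a clif" where
  "cconj u = cl_hat (cl_rev u)"


lemma cconj_apply: "cconj u A = sgn4 (card A) * u A"
  by (simp add: cconj_def cl_hat_def cl_rev_def sgn4_def)


lemma mult_out: "\<not> C \<subseteq> {0..<n} \<Longrightarrow> cl_mult n eta u v C = 0"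
  unfolding cl_mult_def by (intro sum.neutral ballI) (auto simp: subset_iff)

lemma mult_alt: "C \<subseteq> {0..<n} \<Longrightarrow> cl_mult n eta u v C =
   (\<Sum>A\<in>Pow {0..<n}. u A * v ((A - C) \<union> (C - A)) * blade_sign eta A ((A - C) \<union> (C - A)))"
proof -
  assume C: "C \<subseteq> {0..<n}"
  have e: "\<And>A B. ((A - B) \<union> (B - A) = C) = (B = (A - C) \<union> (C - A))" by blast
  show ?thesis unfolding cl_mult_def e
    by (rule sum.cong[OF refl]) (use C in auto)
qed

lemma bs_prod:
  assumes U: "finite U" and X: "X \<subseteq> U" and Y: "Y \<subseteq> U"
  shows "blade_sign eta X Y =
    (\<Prod>p\<in>U\<times>U. if fst p \<in> X \<and> snd p \<in> Y \<and> snd p < fst p then -1 else 1) *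
    (\<Prod>i\<in>U. if i \<in> X \<and> i \<in> Y then eta i else 1)"
proof -
  have s: "(U \<times> U) \<inter> {p. fst p \<in> X \<and> snd p \<in> Y \<and> snd p < fst p} = {(a, b). a \<in> X \<and> b \<in> Y \<and> b < a}"
    using X Y by auto
  have 1: "(\<Prod>p\<in>U\<times>U. if fst p \<in> X \<and> snd p \<in> Y \<and> snd p < fst p then -1 else 1) =
     (-1) ^ card {(a, b). a \<in> X \<and> b \<in> Y \<and> b < a}"
    by (subst prod.If_cases) (use U s in auto)
  have 2: "(\<Prod>i\<in>U. if i \<in> X \<and> i \<in> Y then eta i else 1) = prod eta (X \<inter> Y)"
  proof -
    have "U \<inter> (X \<inter> Y) = X \<inter> Y" using X by blast
    then show ?thesis using prod.inter_restrict[OF U, of eta "X \<inter> Y"] by simp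
  qed
  show ?thesis unfolding blade_sign_def 1 2 ..
qed

lemma rearr: "(a::'a::comm_ring_1) * c = a' * c' \<Longrightarrow> b * d = b' * d' \<Longrightarrow> a * b * (c * d) = a' * b' * (c' * d')"
proof -
  assume h: "a * c = a' * c'" "b * d = b' * d'"
  have "a * b * (c * d) = (a * c) * (b * d)" by (simp add: ac_simps)
  also have "\<dots> = (a' * c') * (b' * d')" using h by simp
  also have "\<dots> = a' * b' * (c' * d')" by (simp add: ac_simps)
  finally show ?thesis .
qed

lemma cocycle:
  assumes U: "finite U" and X: "X \<subseteq> U" and Y: "Y \<subseteq> U" and Z: "Z \<subseteq> U"
  shows "blade_sign eta X Y * blade_sign eta ((X - Y) \<union> (Y - X)) Z =
         blade_sign eta Y Z * blade_sign eta X ((Y - Z) \<union> (Z - Y))"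
proof -
  have XY: "(X - Y) \<union> (Y - X) \<subseteq> U" and YZ: "(Y - Z) \<union> (Z - Y) \<subseteq> U" using X Y Z by auto
  let ?P = "\<lambda>X Y. (\<Prod>p\<in>U\<times>U. if fst p \<in> X \<and> snd p \<in> Y \<and> snd p < fst p then -1 else (1::'a))"
  let ?E = "\<lambda>X Y. (\<Prod>i\<in>U. if i \<in> X \<and> i \<in> Y then eta i else 1)"
  have p: "?P X Y * ?P ((X - Y) \<union> (Y - X)) Z = ?P Y Z * ?P X ((Y - Z) \<union> (Z - Y))"
    unfolding prod.distrib[symmetric] by (rule prod.cong[OF refl]) auto
  have e: "?E X Y * ?E ((X - Y) \<union> (Y - X)) Z = ?E Y Z * ?E X ((Y - Z) \<union> (Z - Y))"
    unfolding prod.distrib[symmetric] by (rule prod.cong[OF refl]) auto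
  show ?thesis
    unfolding bs_prod[OF U X Y] bs_prod[OF U XY Z] bs_prod[OF U Y Z] bs_prod[OF U X YZ]
    by (rule rearr[OF p e])
qed

lemma mult_assoc:
  "cl_mult n eta (cl_mult n eta u v) w = cl_mult n eta u (cl_mult n eta v w)"
proof
  fix D
  let ?U = "{0..<n::nat}"
  let ?s = "blade_sign eta"
  show "cl_mult n eta (cl_mult n eta u v) w D = cl_mult n eta u (cl_mult n eta v w) D"
  proof (cases "D \<subseteq> ?U")
    case False then show ?thesis by (simp add: mult_out)
  next
    case D: True
    have L: "cl_mult n eta (cl_mult n eta u v) w D =
      (\<Sum>A\<in>Pow ?U. \<Sum>E\<in>Pow ?U. u A * v ((A - E) \<union> (E - A)) * ?s A ((A - E) \<union> (E - A))
          * w ((E - D) \<union> (D - E)) * ?s E ((E - D) \<union> (D - E)))"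
      unfolding mult_alt[OF D]
      by (subst sum.swap, rule sum.cong[OF refl], subst mult_alt, simp, simp add: sum_distrib_right)
    have R: "cl_mult n eta u (cl_mult n eta v w) D =
      (\<Sum>A\<in>Pow ?U. \<Sum>B\<in>Pow ?U. u A * v B * w ((B - ((A - D) \<union> (D - A))) \<union> (((A - D) \<union> (D - A)) - B))
          * ?s B ((B - ((A - D) \<union> (D - A))) \<union> (((A - D) \<union> (D - A)) - B)) * ?s A ((A - D) \<union> (D - A)))"
      unfolding mult_alt[OF D]
    proof (rule sum.cong[OF refl])
      fix A assume A: "A \<in> Pow ?U"
      have AD: "(A - D) \<union> (D - A) \<subseteq> ?U" using A D by auto
      show "u A * cl_mult n eta v w ((A - D) \<union> (D - A)) * ?s A ((A - D) \<union> (D - A)) =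
        (\<Sum>B\<in>Pow ?U. u A * v B * w ((B - ((A - D) \<union> (D - A))) \<union> (((A - D) \<union> (D - A)) - B))
          * ?s B ((B - ((A - D) \<union> (D - A))) \<union> (((A - D) \<union> (D - A)) - B)) * ?s A ((A - D) \<union> (D - A)))"
        unfolding mult_alt[OF AD] by (simp add: sum_distrib_left sum_distrib_right ac_simps)
    qed
    show ?thesis unfolding L R
    proof (rule sum.cong[OF refl])
      fix A assume A: "A \<in> Pow ?U"
      show "(\<Sum>E\<in>Pow ?U. u A * v ((A - E) \<union> (E - A)) * ?s A ((A - E) \<union> (E - A))
          * w ((E - D) \<union> (D - E)) * ?s E ((E - D) \<union> (D - E))) =
        (\<Sum>B\<in>Pow ?U. u A * v B * w ((B - ((A - D) \<union> (D - A))) \<union> (((A - D) \<union> (D - A)) - B))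
          * ?s B ((B - ((A - D) \<union> (D - A))) \<union> (((A - D) \<union> (D - A)) - B)) * ?s A ((A - D) \<union> (D - A)))"
      proof (rule sum.reindex_bij_witness[where i = "\<lambda>X. (A - X) \<union> (X - A)" and j = "\<lambda>X. (A - X) \<union> (X - A)"])
        fix E assume E: "E \<in> Pow ?U"
        let ?B = "(A - E) \<union> (E - A)"
        have B: "?B \<subseteq> ?U" using A E by auto
        have ED: "(E - D) \<union> (D - E) \<subseteq> ?U" using E D by auto
        have e1: "(?B - ((A - D) \<union> (D - A))) \<union> (((A - D) \<union> (D - A)) - ?B) = (E - D) \<union> (D - E)" by blast
        have e2: "(A - ?B) \<union> (?B - A) = E" by blast
        have e3: "(?B - ((E - D) \<union> (D - E))) \<union> (((E - D) \<union> (D - E)) - ?B) = (A - D) \<union> (D - A)" by blast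
        have c: "?s A ?B * ?s E ((E - D) \<union> (D - E)) = ?s ?B ((E - D) \<union> (D - E)) * ?s A ((A - D) \<union> (D - A))"
          using cocycle[where X=A and Y="?B" and Z="(E - D) \<union> (D - E)" and U="?U" and eta=eta] A B ED unfolding e2 e3 by simp
        show "u A * v ?B * w ((?B - ((A - D) \<union> (D - A))) \<union> (((A - D) \<union> (D - A)) - ?B))
          * ?s ?B ((?B - ((A - D) \<union> (D - A))) \<union> (((A - D) \<union> (D - A)) - ?B)) * ?s A ((A - D) \<union> (D - A)) =
          u A * v ((A - E) \<union> (E - A)) * ?s A ((A - E) \<union> (E - A))
          * w ((E - D) \<union> (D - E)) * ?s E ((E - D) \<union> (D - E))"
          unfolding e1 using c by (simp add: ac_simps)
      qed (use A in auto)
    qed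
  qed
qed

lemma conj_mult: "cconj (cl_mult n eta u v) = cl_mult n eta (cconj v) (cconj u)"
proof
  fix C
  show "cconj (cl_mult n eta u v) C = cl_mult n eta (cconj v) (cconj u) C"
  proof (cases "C \<subseteq> {0..<n}")
    case False then show ?thesis by (simp add: mult_out cconj_apply)
  next
    case True
    show ?thesis
      unfolding cconj_apply cl_mult_def sum_distrib_left
      apply (subst sum.swap)
      apply (rule sum.cong[OF refl])+
    proof -
      fix A B assume A: "A \<in> Pow {0..<n}" and B: "B \<in> Pow {0..<n}"
      have fA: "finite A" and fB: "finite B" using A B finite_subset by auto
      have e: "(B - A) \<union> (A - B) = (A - B) \<union> (B - A)" by blast
      show "sgn4 (card C) * (if A - B \<union> (B - A) = C then u A * v B * blade_sign eta A B else 0) =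
         (if B - A \<union> (A - B) = C then sgn4 (card B) * v B * (sgn4 (card A) * u A) * blade_sign eta B A else 0)"
        unfolding e using rev_sign[OF fA fB, of eta]
        by (auto simp: ac_simps)
    qed
  qed
qed

lemma conj_conj: "cconj (cconj u) = u"
  by (rule ext) (simp add: cconj_apply mult.assoc[symmetric] sgn4_sq)

lemma conj_one: "cconj cl_one = cl_one"
  by (rule ext) (simp add: cconj_apply cl_one_def sgn4_def)

lemma bs_empty: "blade_sign eta {} B = 1" "blade_sign eta A {} = 1"
  by (simp_all add: blade_sign_def)

lemma one_mult: "u \<in> cl_carrier n \<Longrightarrow> cl_mult n eta cl_one u = u"
proof
  fix C assume u: "u \<in> cl_carrier n"
  show "cl_mult n eta cl_one u C = u C"
  proof (cases "C \<subseteq> {0..<n}")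
    case False then show ?thesis using u by (simp add: mult_out cl_carrier_def)
  next
    case True
    then show ?thesis unfolding mult_alt[OF True] cl_one_def
      by (simp add: bs_empty if_distrib[of "\<lambda>x. x * _"] cong: if_cong)
  qed
qed

lemma mult_one: "u \<in> cl_carrier n \<Longrightarrow> cl_mult n eta u cl_one = u"
proof
  fix C assume u: "u \<in> cl_carrier n"
  show "cl_mult n eta u cl_one C = u C"
  proof (cases "C \<subseteq> {0..<n}")
    case False then show ?thesis using u by (simp add: mult_out cl_carrier_def)
  next
    case True
    have e: "\<And>A. ((A - C) \<union> (C - A) = {}) = (C = A)" by blast
    have "(\<Sum>A\<in>Pow {0..<n}. u A * cl_one ((A - C) \<union> (C - A)) * blade_sign eta A ((A - C) \<union> (C - A)))
       = (\<Sum>A\<in>Pow {0..<n}. if A = C then u A else 0)"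
      by (rule sum.cong[OF refl]) (auto simp: e cl_one_def bs_empty)
    then show ?thesis unfolding mult_alt[OF True] using True by simp
  qed
qed

lemma mult_carrier: "cl_mult n eta u v \<in> cl_carrier n"
  by (simp add: cl_carrier_def mult_out)

lemma conj_carrier: "u \<in> cl_carrier n \<Longrightarrow> cconj u \<in> cl_carrier n"
  by (simp add: cl_carrier_def cconj_apply)

lemma units_X:
  assumes T: "T \<in> cl_units n eta"
  shows "cl_mult n eta (cconj T) T \<in> cl_units n eta"
proof -
  obtain V where V: "V \<in> cl_carrier n" and TV: "cl_mult n eta T V = cl_one" and VT: "cl_mult n eta V T = cl_one"
    using T unfolding cl_units_def by blast
  have Tc: "T \<in> cl_carrier n" using T unfolding cl_units_def by blast
  let ?m = "cl_mult n eta"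
  have cVcT: "?m (cconj V) (cconj T) = cl_one" using arg_cong[OF TV, of cconj] by (simp add: conj_mult conj_one)
  have cTcV: "?m (cconj T) (cconj V) = cl_one" using arg_cong[OF VT, of cconj] by (simp add: conj_mult conj_one)
  have 1: "?m (?m (cconj T) T) (?m V (cconj V)) = cl_one"
    by (simp add: mult_assoc[symmetric], simp add: mult_assoc TV one_mult conj_carrier V cTcV)
  have 2: "?m (?m V (cconj V)) (?m (cconj T) T) = cl_one"
    by (simp add: mult_assoc[symmetric], simp add: mult_assoc cVcT mult_one Tc VT one_mult)
  show ?thesis unfolding cl_units_def using 1 2 mult_carrier by blast
qed

lemma sgn4_neg:
  assumes k: "k mod 4 \<notin> {0, 3}"
  shows "(sgn4 k :: 'a::comm_ring_1) = -1"
proof -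
  obtain q r where kq: "k = 4 * q + r" and r: "r = 1 \<or> r = 2"
  proof -
    have "k mod 4 < 4" by simp
    then have "k mod 4 = 1 \<or> k mod 4 = 2" using k by auto
    moreover have "k = 4 * (k div 4) + k mod 4" by simp
    ultimately show ?thesis using that by blast
  qed
  have "odd (k + k * (k - 1) div 2)"
    using r
  proof
    assume r1: "r = 1"
    have k1: "k - 1 = 4 * q" using kq r1 by simp
    have "k * (k - 1) div 2 = k * (2 * q)" unfolding k1 by simp
    then show ?thesis using kq r1 by simp
  next
    assume r2: "r = 2"
    have k1: "k - 1 = 4 * q + 1" using kq r2 by simp
    have k2: "k = 2 * (2 * q + 1)" using kq r2 by simp
    have "k * (k - 1) div 2 = (2 * q + 1) * (4 * q + 1)" unfolding k1 by (subst k2) simp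
    then show ?thesis using kq r2 by simp
  qed
  then show ?thesis unfolding sgn4_def power_add[symmetric] minus_one_power_iff by simp
qed

lemma neg_self: fixes x :: "'a::field_char_0" assumes "x = - x" shows "x = 0"
proof -
  have "x + x = 0" using assms by (metis add.left_inverse)
  then have "2 * x = 0" by (simp only: mult_2)
  then show ?thesis by simp
qed

lemma X_grades:
  fixes T :: "'a::field_char_0 clif"
  shows "cl_mult n eta (cl_hat (cl_rev T)) T \<in> cl_grades_mod4 n {0, 3}"
proof -
  let ?X = "cl_mult n eta (cconj T) T"
  have cX: "cconj ?X = ?X" by (simp add: conj_mult conj_conj)
  have "?X A = 0" if A: "card A mod 4 \<notin> {0, 3}" for A
  proof -
    have "?X A = sgn4 (card A) * ?X A" using fun_cong[OF cX, of A] by (simp only: cconj_apply)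
    also have "\<dots> = - ?X A" using sgn4_neg[OF A, where 'a='a] by simp
    finally show ?thesis by (rule neg_self)
  qed
  then show ?thesis unfolding cl_grades_mod4_def cconj_def using mult_carrier by blast
qed

lemma generic:
  fixes eta :: "nat \<Rightarrow> 'a::field_char_0"
  assumes n: "n \<ge> 2"
  shows
   "(\<forall>T \<in> cl_carrier n. cl_mult n eta (cl_hat (cl_rev T)) T \<in> cl_grades_mod4 n {0, 3}) \<and>
    (n mod 4 \<in> {0, 1, 2} \<longrightarrow> cl_B n eta = {T \<in> cl_units n eta.
        cl_mult n eta (cl_hat (cl_rev T)) T \<in> cl_grades n {0} \<inter> cl_units n eta}) \<and>
    (n mod 4 = 3 \<longrightarrow> cl_B n eta = {T \<in> cl_units n eta.
        cl_mult n eta (cl_hat (cl_rev T)) T \<in> cl_grades n {0, n} \<inter> cl_units n eta}) \<and>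
    (n \<le> 3 \<longrightarrow> cl_B n eta = cl_units n eta)"
proof (intro conjI impI)
  show "\<forall>T \<in> cl_carrier n. cl_mult n eta (cl_hat (cl_rev T)) T \<in> cl_grades_mod4 n {0, 3}"
    using X_grades by blast
next
  assume m: "n mod 4 \<in> {0, 1, 2}"
  have Zeq: "X \<in> cl_Z n \<longleftrightarrow> X \<in> cl_grades n {0}" if X: "X \<in> cl_grades_mod4 n {0, 3}" for X :: "'a clif"
  proof (cases "even n")
    case True then show ?thesis by (simp add: cl_Z_def)
  next
    case False
    then have m1: "n mod 4 = 1" using m by simp presburger
    show ?thesis using False X m1 unfolding cl_Z_def cl_grades_def cl_grades_mod4_def by auto
  qed
  show "cl_B n eta = {T \<in> cl_units n eta.
        cl_mult n eta (cl_hat (cl_rev T)) T \<in> cl_grades n {0} \<inter> cl_units n eta}"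
    unfolding cl_B_def using Zeq X_grades by blast
next
  assume m: "n mod 4 = 3"
  then have "odd n" by presburger
  then show "cl_B n eta = {T \<in> cl_units n eta.
        cl_mult n eta (cl_hat (cl_rev T)) T \<in> cl_grades n {0, n} \<inter> cl_units n eta}"
    unfolding cl_B_def cl_Z_def by simp
next
  assume n3: "n \<le> 3"
  have "T \<in> cl_B n eta" if T: "T \<in> cl_units n eta" for T
  proof -
    let ?X = "cl_mult n eta (cl_hat (cl_rev T)) T"
    have U: "?X \<in> cl_units n eta" using units_X[OF T] unfolding cconj_def .
    have G: "?X \<in> cl_grades_mod4 n {0, 3}" by (rule X_grades)
    have "?X \<in> cl_Z n"
    proof -
      have "?X A = 0" if "card A \<notin> (if even n then {0} else {0, n})" for A
      proof (cases "A \<subseteq> {0..<n}")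
        case False then show ?thesis using G unfolding cl_grades_mod4_def cl_carrier_def by blast
      next
        case True
        then have "card A \<le> n" using card_mono[of "{0..<n}" A] by simp
        moreover have "n = 2 \<or> n = 3" using n n3 by linarith
        ultimately have "card A mod 4 \<notin> {0, 3}" using that
          by (auto split: if_splits)
        then show ?thesis using G unfolding cl_grades_mod4_def by blast
      qed
      then show ?thesis using G unfolding cl_Z_def cl_grades_def cl_grades_mod4_def
        by (cases "even n") auto
    qed
    then show ?thesis using T U unfolding cl_B_def by blast
  qed
  then show "cl_B n eta = cl_units n eta" unfolding cl_B_def by blast
qed

theorem mainTheorem7:
  shows
  "(\<forall>p q. p + q \<ge> 2 \<longrightarrow>
     (let n = p + q; eta = eta_pq p :: nat \<Rightarrow> real in
       (\<forall>T \<in> cl_carrier n. cl_mult n eta (cl_hat (cl_rev T)) T \<in> cl_grades_mod4 n {0, 3}) \<and>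
       (n mod 4 \<in> {0, 1, 2} \<longrightarrow> cl_B n eta = {T \<in> cl_units n eta.
           cl_mult n eta (cl_hat (cl_rev T)) T \<in> cl_grades n {0} \<inter> cl_units n eta}) \<and>
       (n mod 4 = 3 \<longrightarrow> cl_B n eta = {T \<in> cl_units n eta.
           cl_mult n eta (cl_hat (cl_rev T)) T \<in> cl_grades n {0, n} \<inter> cl_units n eta}) \<and>
       (n \<le> 3 \<longrightarrow> cl_B n eta = cl_units n eta)))
   \<and>
   (\<forall>n. n \<ge> 2 \<longrightarrow>
     (let eta = (\<lambda>_. 1) :: nat \<Rightarrow> complex in
       (\<forall>T \<in> cl_carrier n. cl_mult n eta (cl_hat (cl_rev T)) T \<in> cl_grades_mod4 n {0, 3}) \<and>
       (n mod 4 \<in> {0, 1, 2} \<longrightarrow> cl_B n eta = {T \<in> cl_units n eta.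
           cl_mult n eta (cl_hat (cl_rev T)) T \<in> cl_grades n {0} \<inter> cl_units n eta}) \<and>
       (n mod 4 = 3 \<longrightarrow> cl_B n eta = {T \<in> cl_units n eta.
           cl_mult n eta (cl_hat (cl_rev T)) T \<in> cl_grades n {0, n} \<inter> cl_units n eta}) \<and>
       (n \<le> 3 \<longrightarrow> cl_B n eta = cl_units n eta)))"
    using generic[where 'a=real] generic[where 'a=complex] by (simp add: Let_def)

end
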